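(* Let $n\ge2$ and $\rho=\sum_{i=0}^n\lambda_i|D_n^i\rangle\langle D_n^i|$ with $\lambda_i\ge0$, $\sum_i\lambda_i=1$. Then $L(\rho)=n$ if and only if at least one of the following holds: (i) $\lambda_0\lambda_n\neq0$; (ii) $\lambda_i\neq0$ for every odd $i\in\{0,\dots,n\}$; (iii) $\lambda_i\ne0$ for every even $i\in\{0,\dots,n\}$.
   Context: Dicke states: $|D_n^i\rangle=\binom{n}{i}^{-1/2}\sum_{s\in\{0,1\}^n,\ \sum_js_j=i}|s_1\rangle\otimes\cdots\otimes|s_n\rangle$. For $S\subseteq[n]$, $\rho_S$ is the partial trace of $\rho$ over qubits outside $S$; $\mathcal C(\rho,\mathcal S)=\{\sigma\text{ density matrix}:\sigma_S=\rho_S\ \forall S\in\mathcal S\}$; $\mathcal S$ determines $\rho$ if $\mathcal C(\rho,\mathcal S)=\{\rho\}$; $L(\rho)=\min_{\mathcal S\text{ determines }\rho}\max_{S\in\mathcal S}|S|$. *)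

theory Defs
  imports Complex_Main
begin

text \<open>Computational basis states of n qubits: bit strings s : {0..<n} -> {0,1},
  encoded as functions nat => bool that are False outside {0..<n}
  (True = |1>, False = |0>).  An operator on (C^2)^{\<otimes>n} is a function
  of two basis labels, required to vanish outside the basis.\<close>

definition bits :: "nat \<Rightarrow> (nat \<Rightarrow> bool) set" where
  "bits n = {s. \<forall>i. n \<le> i \<longrightarrow> \<not> s i}"

type_synonym op = "(nat \<Rightarrow> bool) \<Rightarrow> (nat \<Rightarrow> bool) \<Rightarrow> complex"

definition density :: "nat \<Rightarrow> op \<Rightarrow> bool" where
  "density n \<sigma> \<longleftrightarrow>
     (\<forall>s t. (s \<notin> bits n \<or> t \<notin> bits n) \<longrightarrow> \<sigma> s t = 0) \<and>
     (\<forall>s t. \<sigma> t s = cnj (\<sigma> s t)) \<and>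
     (\<forall>v :: (nat \<Rightarrow> bool) \<Rightarrow> complex.
        let q = (\<Sum>s\<in>bits n. \<Sum>t\<in>bits n. cnj (v s) * \<sigma> s t * v t)
        in Im q = 0 \<and> Re q \<ge> 0) \<and>
     (\<Sum>s\<in>bits n. \<sigma> s s) = 1"

text \<open>Partial trace over the qubits outside S: the reduced operator acts on bit
  strings supported in S; a basis label of the full system is the disjoint
  union of a label on S and a label c on the complement [n]-S.\<close>

definition ptrace :: "nat \<Rightarrow> nat set \<Rightarrow> op \<Rightarrow> op" where
  "ptrace n S \<sigma> a b =
     (if (\<forall>i. a i \<longrightarrow> i \<in> S \<and> i < n) \<and> (\<forall>i. b i \<longrightarrow> i \<in> S \<and> i < n)
      then (\<Sum>c\<in>{c\<in>bits n. \<forall>i\<in>S. \<not> c i}. \<sigma> (\<lambda>i. a i \<or> c i) (\<lambda>i. b i \<or> c i))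
      else 0)"

definition compat :: "nat \<Rightarrow> op \<Rightarrow> nat set set \<Rightarrow> op set" where
  "compat n \<rho> SS = {\<sigma>. density n \<sigma> \<and> (\<forall>S\<in>SS. ptrace n S \<sigma> = ptrace n S \<rho>)}"

definition determines :: "nat \<Rightarrow> nat set set \<Rightarrow> op \<Rightarrow> bool" where
  "determines n SS \<rho> \<longleftrightarrow> compat n \<rho> SS = {\<rho>}"

definition Lval :: "nat \<Rightarrow> op \<Rightarrow> nat" where
  "Lval n \<rho> = (LEAST k. \<exists>SS. SS \<subseteq> Pow {0..<n} \<and> determines n SS \<rho> \<and>
                              (\<forall>S\<in>SS. card S \<le> k))"

definition dicke :: "nat \<Rightarrow> nat \<Rightarrow> (nat \<Rightarrow> bool) \<Rightarrow> complex" where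
  "dicke n i s = (if s \<in> bits n \<and> card {j. j < n \<and> s j} = i
                  then complex_of_real (1 / sqrt (real (n choose i))) else 0)"

definition dicke_mix :: "nat \<Rightarrow> (nat \<Rightarrow> real) \<Rightarrow> op" where
  "dicke_mix n lam s t = (\<Sum>i\<le>n. complex_of_real (lam i) * dicke n i s * cnj (dicke n i t))"

end

theory Submission
  imports Defs
begin

definition wt :: "nat \<Rightarrow> (nat \<Rightarrow> bool) \<Rightarrow> nat" where
  "wt n s = card {j. j < n \<and> s j}"

lemma bits_lt: "s \<in> bits n \<Longrightarrow> s j \<Longrightarrow> j < n"
  unfolding bits_def using not_le by blast

lemma wt_le: "wt n s \<le> n"
proof -
  have "{j. j < n \<and> s j} \<subseteq> {0..<n}" by auto
  then have "card {j. j < n \<and> s j} \<le> card {0..<n}" by (intro card_mono) auto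
  then show ?thesis unfolding wt_def by simp
qed

lemma wt_bits: "s \<in> bits n \<Longrightarrow> wt n s = card {j. s j}"
proof -
  assume "s \<in> bits n"
  then have "{j. j < n \<and> s j} = {j. s j}" using bits_lt by blast
  then show ?thesis unfolding wt_def by simp
qed
lemma bits_img: "bits n = (\<lambda>B j. j \<in> B) ` Pow {0..<n}"
proof
  show "bits n \<subseteq> (\<lambda>B j. j \<in> B) ` Pow {0..<n}"
  proof
    fix s assume "s \<in> bits n"
    then have "s = (\<lambda>j. j \<in> {j. s j})" and "{j. s j} \<in> Pow {0..<n}"
      by (auto simp: bits_def not_le[symmetric])
    then show "s \<in> (\<lambda>B j. j \<in> B) ` Pow {0..<n}" by (rule image_eqI)
  qed
  show "(\<lambda>B j. j \<in> B) ` Pow {0..<n} \<subseteq> bits n" by (auto simp: bits_def)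
qed
lemma finite_bits[simp]: "finite (bits n)"
  by (simp add: bits_img)
lemma card_wt: "card {s \<in> bits n. wt n s = i} = n choose i"
proof -
  have "{s \<in> bits n. wt n s = i} = (\<lambda>B j. j \<in> B) ` {B. B \<subseteq> {0..<n} \<and> card B = i}"
  proof
    show "{s \<in> bits n. wt n s = i} \<subseteq> (\<lambda>B j. j \<in> B) ` {B. B \<subseteq> {0..<n} \<and> card B = i}"
    proof
      fix s assume a: "s \<in> {s \<in> bits n. wt n s = i}"
      then have b: "s \<in> bits n" and c: "wt n s = i" by auto
      have "s = (\<lambda>j. j \<in> {j. s j})" by simp
      moreover have "{j. s j} \<subseteq> {0..<n}" using b by (auto simp: bits_def) (meson not_le)
      moreover have "card {j. s j} = i" using b c by (simp add: wt_bits)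
      ultimately show "s \<in> (\<lambda>B j. j \<in> B) ` {B. B \<subseteq> {0..<n} \<and> card B = i}"
        by (intro image_eqI[where x="{j. s j}"]) auto
    qed
    show "(\<lambda>B j. j \<in> B) ` {B. B \<subseteq> {0..<n} \<and> card B = i} \<subseteq> {s \<in> bits n. wt n s = i}"
    proof
      fix s assume "s \<in> (\<lambda>B j. j \<in> B) ` {B. B \<subseteq> {0..<n} \<and> card B = i}"
      then obtain B where B: "B \<subseteq> {0..<n}" "card B = i" "s = (\<lambda>j. j \<in> B)" by blast
      then have "s \<in> bits n" by (auto simp: bits_def)
      moreover have "{j. s j} = B" using B by auto
      ultimately show "s \<in> {s \<in> bits n. wt n s = i}" using B by (simp add: wt_bits)
    qed
  qed
  moreover have "inj_on (\<lambda>B j. j \<in> B) {B. B \<subseteq> {0..<n} \<and> card B = i}"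
    by (rule inj_onI) (metis Collect_mem_eq)
  ultimately have "card {s \<in> bits n. wt n s = i} = card {B. B \<subseteq> {0..<n} \<and> card B = i}"
    by (simp add: card_image)
  also have "\<dots> = n choose i" using n_subsets[of "{0..<n}" i] by simp
  finally show ?thesis .
qed

lemma dicke_real: "cnj (dicke n i s) = dicke n i s"
  by (simp add: dicke_def)

lemma dicke_mix_eq: "dicke_mix n lam s t =
  (if s \<in> bits n \<and> t \<in> bits n \<and> wt n s = wt n t
   then complex_of_real (lam (wt n s) / real (n choose wt n s)) else 0)"
proof -
  have w: "card {j. j < n \<and> s j} = wt n s" "card {j. j < n \<and> t j} = wt n t"
    by (simp_all add: wt_def)
  have "dicke_mix n lam s t = (\<Sum>i\<le>n. (if i = wt n s then
          complex_of_real (lam i) * dicke n i s * cnj (dicke n i t) else 0))"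
    unfolding dicke_mix_def by (rule sum.cong) (auto simp: dicke_def w)
  also have "\<dots> = complex_of_real (lam (wt n s)) * dicke n (wt n s) s * cnj (dicke n (wt n s) t)"
    using wt_le[of n s] by (simp add: sum.delta)
  also have "\<dots> = (if s \<in> bits n \<and> t \<in> bits n \<and> wt n s = wt n t
   then complex_of_real (lam (wt n s) / real (n choose wt n s)) else 0)"
  proof -
    have "n choose wt n s > 0" using wt_le[of n s] by simp
    then have "(1 / sqrt (real (n choose wt n s))) * (1 / sqrt (real (n choose wt n s)))
       = 1 / real (n choose wt n s)"
      by (simp add: real_sqrt_mult[symmetric])
    then show ?thesis
      by (auto simp: dicke_def w simp flip: of_real_mult)
  qed
  finally show ?thesis .
qed



definition quad :: "nat \<Rightarrow> op \<Rightarrow> ((nat \<Rightarrow> bool) \<Rightarrow> complex) \<Rightarrow> complex" where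
  "quad n \<sigma> v = (\<Sum>s\<in>bits n. \<Sum>t\<in>bits n. cnj (v s) * \<sigma> s t * v t)"

lemma density_iff: "density n \<sigma> \<longleftrightarrow>
     (\<forall>s t. (s \<notin> bits n \<or> t \<notin> bits n) \<longrightarrow> \<sigma> s t = 0) \<and>
     (\<forall>s t. \<sigma> t s = cnj (\<sigma> s t)) \<and>
     (\<forall>v. Im (quad n \<sigma> v) = 0 \<and> Re (quad n \<sigma> v) \<ge> 0) \<and>
     (\<Sum>s\<in>bits n. \<sigma> s s) = 1"
  unfolding density_def quad_def Let_def by simp

lemma sum_wt: "(\<Sum>s\<in>bits n. f (wt n s)) = (\<Sum>i\<le>n. of_nat (n choose i) * f i)"
proof -
  have "(\<Sum>s\<in>bits n. f (wt n s)) = (\<Sum>s\<in>bits n. \<Sum>i\<le>n. if wt n s = i then f i else 0)"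
    by (rule sum.cong) (auto simp: wt_le)
  also have "\<dots> = (\<Sum>i\<le>n. \<Sum>s\<in>bits n. if wt n s = i then f i else 0)"
    by (rule sum.swap)
  also have "\<dots> = (\<Sum>i\<le>n. of_nat (card {s \<in> bits n. wt n s = i}) * f i)"
    by (rule sum.cong) (simp_all add: sum.inter_filter[symmetric])
  finally show ?thesis by (simp add: card_wt)
qed

lemma quad_dicke: "quad n (dicke_mix n lam) v =
   (\<Sum>i\<le>n. complex_of_real (lam i) *
       (cnj (\<Sum>t\<in>bits n. dicke n i t * v t) * (\<Sum>t\<in>bits n. dicke n i t * v t)))"
proof -
  have "quad n (dicke_mix n lam) v = (\<Sum>s\<in>bits n. \<Sum>t\<in>bits n. \<Sum>i\<le>n.
      complex_of_real (lam i) * (cnj (v s) * dicke n i s) * (dicke n i t * v t))"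
    unfolding quad_def dicke_mix_def
    by (simp add: sum_distrib_left sum_distrib_right dicke_real mult_ac)
  also have "\<dots> = (\<Sum>i\<le>n. \<Sum>s\<in>bits n. \<Sum>t\<in>bits n.
      complex_of_real (lam i) * (cnj (v s) * dicke n i s) * (dicke n i t * v t))"
  proof -
    have "\<And>s. (\<Sum>t\<in>bits n. \<Sum>i\<le>n. complex_of_real (lam i) * (cnj (v s) * dicke n i s) * (dicke n i t * v t))
       = (\<Sum>i\<le>n. \<Sum>t\<in>bits n. complex_of_real (lam i) * (cnj (v s) * dicke n i s) * (dicke n i t * v t))"
      by (rule sum.swap)
    then show ?thesis by (simp only:) (rule sum.swap)
  qed
  also have "\<dots> = (\<Sum>i\<le>n. complex_of_real (lam i) *
       ((\<Sum>s\<in>bits n. cnj (v s) * dicke n i s) * (\<Sum>t\<in>bits n. dicke n i t * v t)))"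
    by (simp add: sum_distrib_left sum_distrib_right mult_ac)
  also have "\<dots> = (\<Sum>i\<le>n. complex_of_real (lam i) *
       (cnj (\<Sum>t\<in>bits n. dicke n i t * v t) * (\<Sum>t\<in>bits n. dicke n i t * v t)))"
    by (simp add: dicke_real mult.commute)
  finally show ?thesis .
qed

lemma cnj_mult_self: "cnj z * z = complex_of_real ((cmod z)^2)"
  using complex_norm_square[of z] by (simp add: mult.commute)

lemma density_dicke_mix:
  assumes "\<forall>i\<le>n. lam i \<ge> 0" and "(\<Sum>i\<le>n. lam i) = 1"
  shows "density n (dicke_mix n lam)"
  unfolding density_iff
proof (intro conjI allI impI)
  fix s t :: "nat \<Rightarrow> bool"
  assume "s \<notin> bits n \<or> t \<notin> bits n"
  then show "dicke_mix n lam s t = 0" by (auto simp: dicke_mix_eq)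
next
  fix s t
  show "dicke_mix n lam t s = cnj (dicke_mix n lam s t)"
    by (simp add: dicke_mix_eq)
next
  fix v
  have q: "quad n (dicke_mix n lam) v = complex_of_real
     (\<Sum>i\<le>n. lam i * (cmod (\<Sum>t\<in>bits n. dicke n i t * v t))^2)"
    by (simp only: quad_dicke cnj_mult_self of_real_sum of_real_mult)
  show "Im (quad n (dicke_mix n lam) v) = 0" by (simp add: q)
  show "Re (quad n (dicke_mix n lam) v) \<ge> 0" unfolding q Re_complex_of_real
    using assms(1) by (intro sum_nonneg) simp
next
  have "(\<Sum>s\<in>bits n. dicke_mix n lam s s) =
      (\<Sum>s\<in>bits n. (\<lambda>i. complex_of_real (lam i / real (n choose i))) (wt n s))"
    by (rule sum.cong) (simp_all add: dicke_mix_eq)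
  also have "\<dots> = (\<Sum>i\<le>n. of_nat (n choose i) * complex_of_real (lam i / real (n choose i)))"
    by (rule sum_wt)
  also have "\<dots> = (\<Sum>i\<le>n. complex_of_real (lam i))"
    by (rule sum.cong) simp_all
  also have "\<dots> = 1" using assms(2) by (simp flip: of_real_sum)
  finally show "(\<Sum>s\<in>bits n. dicke_mix n lam s s) = 1" .
qed



lemma bits_zero: "(\<lambda>_. False) \<in> bits n" by (simp add: bits_def)

lemma bits_upd_True: "s \<in> bits n \<Longrightarrow> j < n \<Longrightarrow> s(j := True) \<in> bits n"
  by (auto simp: bits_def)

lemma bits_upd_False: "s \<in> bits n \<Longrightarrow> s(j := False) \<in> bits n"
  by (auto simp: bits_def)

lemma ptrace_full:
  assumes "\<forall>s t. (s \<notin> bits n \<or> t \<notin> bits n) \<longrightarrow> \<sigma> s t = 0"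
  shows "ptrace n {0..<n} \<sigma> = \<sigma>"
proof (intro ext)
  fix a b
  show "ptrace n {0..<n} \<sigma> a b = \<sigma> a b"
  proof (cases "a \<in> bits n \<and> b \<in> bits n")
    case True
    then have c1: "(\<forall>i. a i \<longrightarrow> i \<in> {0..<n} \<and> i < n) \<and> (\<forall>i. b i \<longrightarrow> i \<in> {0..<n} \<and> i < n)"
      using bits_lt by auto
    have c2: "{c \<in> bits n. \<forall>i\<in>{0..<n}. \<not> c i} = {\<lambda>_. False}"
    proof
      show "{c \<in> bits n. \<forall>i\<in>{0..<n}. \<not> c i} \<subseteq> {\<lambda>_. False}"
      proof
        fix c assume c: "c \<in> {c \<in> bits n. \<forall>i\<in>{0..<n}. \<not> c i}"
        have "c = (\<lambda>_. False)"
        proof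
          fix i show "c i = False" using c bits_lt[of c n i] by auto
        qed
        then show "c \<in> {\<lambda>_. False}" by simp
      qed
      show "{\<lambda>_. False} \<subseteq> {c \<in> bits n. \<forall>i\<in>{0..<n}. \<not> c i}" by (simp add: bits_zero)
    qed
    show ?thesis unfolding ptrace_def using c1 by (simp add: c2)
  next
    case False
    then have "\<not> ((\<forall>i. a i \<longrightarrow> i \<in> {0..<n} \<and> i < n) \<and> (\<forall>i. b i \<longrightarrow> i \<in> {0..<n} \<and> i < n))"
      by (auto simp: bits_def)
    then show ?thesis unfolding ptrace_def using False assms by auto
  qed
qed

lemma ptrace_minus:
  assumes "j < n" "a \<in> bits n" "b \<in> bits n" "\<not> a j" "\<not> b j"
  shows "ptrace n ({0..<n} - {j}) \<sigma> a b = \<sigma> a b + \<sigma> (a(j := True)) (b(j := True))"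
proof -
  have c1: "(\<forall>i. a i \<longrightarrow> i \<in> {0..<n} - {j} \<and> i < n) \<and> (\<forall>i. b i \<longrightarrow> i \<in> {0..<n} - {j} \<and> i < n)"
    using assms bits_lt by auto
  have c2: "{c \<in> bits n. \<forall>i\<in>{0..<n} - {j}. \<not> c i} = {\<lambda>_. False, (\<lambda>_. False)(j := True)}"
  proof
    show "{c \<in> bits n. \<forall>i\<in>{0..<n} - {j}. \<not> c i} \<subseteq> {\<lambda>_. False, (\<lambda>_. False)(j := True)}"
    proof
      fix c assume c: "c \<in> {c \<in> bits n. \<forall>i\<in>{0..<n} - {j}. \<not> c i}"
      have "\<forall>i. i \<noteq> j \<longrightarrow> \<not> c i"
      proof (intro allI impI)
        fix i assume "i \<noteq> j" then show "\<not> c i" using c bits_lt[of c n i] by auto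
      qed
      then have "c = (\<lambda>_. False) \<or> c = (\<lambda>_. False)(j := True)"
      proof (cases "c j")
        case True
        have "c = (\<lambda>_. False)(j := True)"
        proof
          fix i show "c i = ((\<lambda>_. False)(j := True)) i" using True \<open>\<forall>i. i \<noteq> j \<longrightarrow> \<not> c i\<close> by auto
        qed
        then show ?thesis by blast
      next
        case False
        have "c = (\<lambda>_. False)"
        proof
          fix i show "c i = False" using False \<open>\<forall>i. i \<noteq> j \<longrightarrow> \<not> c i\<close> by auto
        qed
        then show ?thesis by blast
      qed
      then show "c \<in> {\<lambda>_. False, (\<lambda>_. False)(j := True)}" by blast
    qed
    show "{\<lambda>_. False, (\<lambda>_. False)(j := True)} \<subseteq> {c \<in> bits n. \<forall>i\<in>{0..<n} - {j}. \<not> c i}"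
      using assms(1) by (auto simp: bits_def)
  qed
  have ne: "(\<lambda>_. False) \<noteq> (\<lambda>_. False)(j := True)" by (metis fun_upd_same)
  have e1: "(\<lambda>i. a i \<or> ((\<lambda>_. False)(j := True)) i) = a(j := True)" by auto
  have e2: "(\<lambda>i. b i \<or> ((\<lambda>_. False)(j := True)) i) = b(j := True)" by auto
  show ?thesis unfolding ptrace_def using c1 ne
    by (simp add: c2 e1 e2 del: fun_upd_apply)
qed



lemma sum_sum_delta:
  fixes \<sigma> :: op and a b :: complex
  assumes "p \<in> bits n" "q \<in> bits n"
  shows "(\<Sum>s\<in>bits n. \<Sum>t\<in>bits n. (if s = p then a else 0) * \<sigma> s t * (if t = q then b else 0))
     = a * \<sigma> p q * b"
proof -
  have "(\<Sum>t\<in>bits n. (if s = p then a else 0) * \<sigma> s t * (if t = q then b else 0))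
      = (if s = p then a * \<sigma> s q * b else 0)" for s
  proof (cases "s = p")
    case True
    have "(\<Sum>t\<in>bits n. (if s = p then a else 0) * \<sigma> s t * (if t = q then b else 0))
       = (\<Sum>t\<in>bits n. if t = q then a * \<sigma> s t * b else 0)"
      using True by (intro sum.cong) auto
    then show ?thesis using True assms(2) by (simp add: sum.delta)
  qed simp
  then show ?thesis using assms(1) by (simp add: sum.delta)
qed

definition pt :: "(nat \<Rightarrow> bool) \<Rightarrow> complex \<Rightarrow> (nat \<Rightarrow> bool) \<Rightarrow> complex" where
  "pt p a = (\<lambda>s. if s = p then a else 0)"

lemma cnj_pt: "cnj (pt p a s) = pt p (cnj a) s" by (simp add: pt_def)

lemma quad3:
  fixes \<sigma> :: op
  assumes "r \<in> bits n" "u \<in> bits n" "w \<in> bits n"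
  shows "quad n \<sigma> (\<lambda>s. pt r x s + pt u a s + pt w b s) =
     cnj x * \<sigma> r r * x + cnj x * \<sigma> r u * a + cnj x * \<sigma> r w * b +
     cnj a * \<sigma> u r * x + cnj a * \<sigma> u u * a + cnj a * \<sigma> u w * b +
     cnj b * \<sigma> w r * x + cnj b * \<sigma> w u * a + cnj b * \<sigma> w w * b"
proof -
  let ?S = "\<lambda>p c q d. (\<Sum>s\<in>bits n. \<Sum>t\<in>bits n. pt p c s * \<sigma> s t * pt q d t)"
  have S: "\<And>p c q d. p \<in> bits n \<Longrightarrow> q \<in> bits n \<Longrightarrow> ?S p c q d = c * \<sigma> p q * d"
    unfolding pt_def by (rule sum_sum_delta)
  have e9: "\<And>a1 a2 a3 m b1 b2 b3::complex. (a1+a2+a3)*m*(b1+b2+b3) =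
     a1*m*b1 + a1*m*b2 + a1*m*b3 + a2*m*b1 + a2*m*b2 + a2*m*b3 + a3*m*b1 + a3*m*b2 + a3*m*b3"
    by (simp add: algebra_simps)
  have "quad n \<sigma> (\<lambda>s. pt r x s + pt u a s + pt w b s) =
     ?S r (cnj x) r x + ?S r (cnj x) u a + ?S r (cnj x) w b +
     ?S u (cnj a) r x + ?S u (cnj a) u a + ?S u (cnj a) w b +
     ?S w (cnj b) r x + ?S w (cnj b) u a + ?S w (cnj b) w b"
    unfolding quad_def complex_cnj_add cnj_pt e9 sum.distrib by (rule refl)
  then show ?thesis by (simp only: S assms)
qed

lemma density_parts:
  assumes "density n \<sigma>"
  shows "\<forall>s t. (s \<notin> bits n \<or> t \<notin> bits n) \<longrightarrow> \<sigma> s t = 0"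
    and "\<forall>s t. \<sigma> t s = cnj (\<sigma> s t)"
    and "\<forall>v. Im (quad n \<sigma> v) = 0 \<and> Re (quad n \<sigma> v) \<ge> 0"
    and "(\<Sum>s\<in>bits n. \<sigma> s s) = 1"
proof -
  have d: "(\<forall>s t. (s \<notin> bits n \<or> t \<notin> bits n) \<longrightarrow> \<sigma> s t = 0) \<and>
     (\<forall>s t. \<sigma> t s = cnj (\<sigma> s t)) \<and>
     (\<forall>v. Im (quad n \<sigma> v) = 0 \<and> Re (quad n \<sigma> v) \<ge> 0) \<and>
     (\<Sum>s\<in>bits n. \<sigma> s s) = 1" using assms unfolding density_iff .
  show "\<forall>s t. (s \<notin> bits n \<or> t \<notin> bits n) \<longrightarrow> \<sigma> s t = 0" using d by (rule conjunct1)
  show "\<forall>s t. \<sigma> t s = cnj (\<sigma> s t)" using d by (rule conjunct1[OF conjunct2])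
  show "\<forall>v. Im (quad n \<sigma> v) = 0 \<and> Re (quad n \<sigma> v) \<ge> 0" using d by (rule conjunct1[OF conjunct2[OF conjunct2]])
  show "(\<Sum>s\<in>bits n. \<sigma> s s) = 1" using d by (rule conjunct2[OF conjunct2[OF conjunct2]])
qed

lemma psd_quad:
  assumes "density n \<sigma>"
  shows "Im (quad n \<sigma> v) = 0" "Re (quad n \<sigma> v) \<ge> 0"
  using density_parts(3)[OF assms] by auto

lemma herm: "density n \<sigma> \<Longrightarrow> \<sigma> t s = cnj (\<sigma> s t)"
  using density_parts(2) by blast

lemma outside: "density n \<sigma> \<Longrightarrow> s \<notin> bits n \<or> t \<notin> bits n \<Longrightarrow> \<sigma> s t = 0"
  using density_parts(1) by blast

lemma trace1: "density n \<sigma> \<Longrightarrow> (\<Sum>s\<in>bits n. \<sigma> s s) = 1"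
  using density_parts(4) by blast

lemma psd_diag:
  assumes "density n \<sigma>" "s \<in> bits n"
  shows "Im (\<sigma> s s) = 0" "Re (\<sigma> s s) \<ge> 0"
proof -
  have "quad n \<sigma> (pt s 1) = \<sigma> s s"
    unfolding quad_def cnj_pt using sum_sum_delta[OF assms(2) assms(2), of 1 \<sigma> 1]
    by (simp add: pt_def)
  then show "Im (\<sigma> s s) = 0" "Re (\<sigma> s s) \<ge> 0"
    using psd_quad[OF assms(1), of "pt s 1"] by simp_all
qed

lemma psd_kernel:
  assumes "density n \<sigma>" "r \<in> bits n" "u \<in> bits n" "w \<in> bits n"
    and "cnj a * \<sigma> u u * a + cnj a * \<sigma> u w * b + cnj b * \<sigma> w u * a + cnj b * \<sigma> w w * b = 0"
  shows "a * \<sigma> r u + b * \<sigma> r w = 0"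
proof (rule ccontr)
  define B where "B = a * \<sigma> r u + b * \<sigma> r w"
  assume "a * \<sigma> r u + b * \<sigma> r w \<noteq> 0"
  then have Bne: "B \<noteq> 0" by (simp add: B_def)
  define c where "c = Re (\<sigma> r r)"
  have c0: "c \<ge> 0" and crr: "\<sigma> r r = complex_of_real c"
    using psd_diag[OF assms(1,2)] by (simp_all add: c_def complex_eq_iff)
  have h1: "\<sigma> u r = cnj (\<sigma> r u)" and h2: "\<sigma> w r = cnj (\<sigma> r w)"
    by (rule herm[OF assms(1)])+
  have cB: "cnj B = cnj a * \<sigma> u r + cnj b * \<sigma> w r"
    unfolding h1 h2 B_def by simp
  define x where "x = - B / complex_of_real (c + 1)"
  have "quad n \<sigma> (\<lambda>s. pt r x s + pt u a s + pt w b s) =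
        cnj x * x * complex_of_real c + cnj x * B + x * cnj B"
  proof -
    have "quad n \<sigma> (\<lambda>s. pt r x s + pt u a s + pt w b s) =
      cnj x * \<sigma> r r * x + (cnj x * (a * \<sigma> r u + b * \<sigma> r w)) + x * (cnj a * \<sigma> u r + cnj b * \<sigma> w r)
      + (cnj a * \<sigma> u u * a + cnj a * \<sigma> u w * b + cnj b * \<sigma> w u * a + cnj b * \<sigma> w w * b)"
      unfolding quad3[OF assms(2,3,4)] by (simp add: algebra_simps)
    then show ?thesis unfolding assms(5) crr B_def[symmetric] cB[symmetric] by (simp add: mult_ac)
  qed
  also have "\<dots> = complex_of_real ((cmod B)^2 * (c / (c+1)^2 - 2 / (c+1)))"
  proof -
    define d where "d = complex_of_real (c + 1)"
    have d0: "d \<noteq> 0" unfolding d_def of_real_eq_0_iff using c0 by linarith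
    have cd: "cnj d = d" by (simp add: d_def)
    have N: "B * cnj B = complex_of_real ((cmod B)^2)" by (rule complex_norm_square[symmetric])
    have x1: "cnj x * x * complex_of_real c = B * cnj B * complex_of_real c / (d * d)"
      unfolding x_def d_def[symmetric] using cd by (simp add: field_simps)
    have x2: "cnj x * B = - (B * cnj B) / d"
      unfolding x_def d_def[symmetric] using cd by (simp add: field_simps)
    have x3: "x * cnj B = - (B * cnj B) / d"
      unfolding x_def d_def[symmetric] by (simp add: field_simps)
    have "cnj x * x * complex_of_real c + cnj x * B + x * cnj B
        = complex_of_real ((cmod B)^2) * (complex_of_real c / (d*d) - 2 / d)"
      unfolding x1 x2 x3 N using d0 by (simp add: field_simps)
    also have "\<dots> = complex_of_real ((cmod B)^2 * (c / (c+1)^2 - 2 / (c+1)))"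
      by (simp add: d_def power2_eq_square)
    finally show ?thesis .
  qed
  finally have q: "quad n \<sigma> (\<lambda>s. pt r x s + pt u a s + pt w b s) =
     complex_of_real ((cmod B)^2 * (c / (c+1)^2 - 2 / (c+1)))" .
  have "c / (c+1)^2 - 2 / (c+1) < 0"
  proof -
    have ne: "c + 1 \<noteq> 0" using c0 by linarith
    have "c / (c+1)^2 - 2 / (c+1) = -(c+2) / (c+1)^2"
    proof -
      define e where "e = c + 1"
      have "e \<noteq> 0" using ne by (simp add: e_def)
      moreover have "c = e - 1" by (simp add: e_def)
      ultimately show ?thesis unfolding e_def[symmetric] by (simp add: field_simps power2_eq_square)
    qed
    moreover have "-(c+2) / (c+1)^2 < 0"
      using c0 by (intro divide_neg_pos) auto
    ultimately show ?thesis by simp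
  qed
  moreover have "(cmod B)^2 > 0" using Bne by simp
  ultimately have "(cmod B)^2 * (c / (c+1)^2 - 2 / (c+1)) < 0" by (simp add: mult_pos_neg)
  then show False using psd_quad(2)[OF assms(1), of "\<lambda>s. pt r x s + pt u a s + pt w b s"] q
    by simp
qed



definition cs :: "nat \<Rightarrow> nat \<Rightarrow> bool" where "cs i = (\<lambda>k. k < i)"

lemma cs_bits: "i \<le> n \<Longrightarrow> cs i \<in> bits n" by (auto simp: cs_def bits_def)

lemma wt_cs: "i \<le> n \<Longrightarrow> wt n (cs i) = i"
proof -
  assume "i \<le> n"
  then have "{j. j < n \<and> cs i j} = {..<i}" by (auto simp: cs_def)
  then show ?thesis by (simp add: wt_def)
qed

lemma wt_upd_True:
  assumes "j < n" "\<not> s j"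
  shows "wt n (s(j := True)) = Suc (wt n s)"
proof -
  have "{k. k < n \<and> (s(j := True)) k} = insert j {k. k < n \<and> s k}" using assms by auto
  moreover have "j \<notin> {k. k < n \<and> s k}" using assms by auto
  ultimately show ?thesis unfolding wt_def by simp
qed

lemma wt_upd_False:
  assumes "j < n" "s j"
  shows "wt n s = Suc (wt n (s(j := False)))"
proof -
  have "s = (s(j := False))(j := True)" using assms by (intro ext) simp
  then have "wt n s = wt n ((s(j := False))(j := True))" by simp
  also have "\<dots> = Suc (wt n (s(j := False)))" using assms(1) by (intro wt_upd_True) auto
  finally show ?thesis .
qed

lemma wt0: "s \<in> bits n \<Longrightarrow> wt n s = 0 \<Longrightarrow> s = (\<lambda>_. False)"
proof
  fix k assume "s \<in> bits n" "wt n s = 0"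
  then have "{j. j < n \<and> s j} = {}" unfolding wt_def by (simp add: card_eq_0_iff)
  then show "s k = False" using bits_lt[OF \<open>s \<in> bits n\<close>, of k] by auto
qed

lemma wt_pos: "wt n s > 0 \<Longrightarrow> \<exists>j<n. s j"
  unfolding wt_def by (metis (mono_tags, lifting) card.empty empty_Collect_eq less_irrefl)

lemma flip:
  fixes \<sigma> \<rho> :: op
  assumes "\<forall>j<n. ptrace n ({0..<n} - {j}) \<sigma> = ptrace n ({0..<n} - {j}) \<rho>"
    and "j < n" "a \<in> bits n" "b \<in> bits n" "\<not> a j" "\<not> b j"
  shows "\<sigma> a b + \<sigma> (a(j := True)) (b(j := True)) = \<rho> a b + \<rho> (a(j := True)) (b(j := True))"
proof -
  have "ptrace n ({0..<n} - {j}) \<sigma> a b = ptrace n ({0..<n} - {j}) \<rho> a b"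
    using assms(1,2) by simp
  then show ?thesis using ptrace_minus[OF assms(2-6)] by simp
qed

lemma diag_alt:
  fixes \<sigma> \<rho> :: op
  assumes H: "\<forall>j<n. ptrace n ({0..<n} - {j}) \<sigma> = ptrace n ({0..<n} - {j}) \<rho>"
  shows "s \<in> bits n \<Longrightarrow> \<sigma> s s - \<rho> s s = (-1)^(wt n s) * (\<sigma> (\<lambda>_. False) (\<lambda>_. False) - \<rho> (\<lambda>_. False) (\<lambda>_. False))"
proof (induction "wt n s" arbitrary: s)
  case 0
  then have "s = (\<lambda>_. False)" using wt0 by metis
  then show ?case using 0 by simp
next
  case (Suc k)
  then obtain j where j: "j < n" "s j" using wt_pos by (metis zero_less_Suc)
  define s0 where "s0 = s(j := False)"
  have s0b: "s0 \<in> bits n" unfolding s0_def using Suc.prems by (rule bits_upd_False)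
  have ws0: "wt n s0 = k" using wt_upd_False[of j n s, OF j] Suc.hyps(2) by (simp add: s0_def)
  have ss0: "s0(j := True) = s" using j by (intro ext) (simp add: s0_def)
  have f: "\<sigma> s0 s0 + \<sigma> s s = \<rho> s0 s0 + \<rho> s s"
    using flip[OF H j(1) s0b s0b] ss0 by (simp add: s0_def)
  have "\<sigma> s s - \<rho> s s = - (\<sigma> s0 s0 - \<rho> s0 s0)" using f by (simp add: algebra_simps)
  also have "\<dots> = (-1)^(wt n s) * (\<sigma> (\<lambda>_. False) (\<lambda>_. False) - \<rho> (\<lambda>_. False) (\<lambda>_. False))"
    unfolding Suc.hyps(2)[symmetric] using Suc.hyps(1)[OF ws0[symmetric] s0b] ws0 by simp
  finally show ?case .
qed



lemma rho_diag: "s \<in> bits n \<Longrightarrow> dicke_mix n lam s s = complex_of_real (lam (wt n s) / real (n choose wt n s))"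
  by (simp add: dicke_mix_eq)

lemma diag_eq:
  fixes \<sigma> :: op
  assumes d: "density n \<sigma>"
    and H: "\<forall>j<n. ptrace n ({0..<n} - {j}) \<sigma> = ptrace n ({0..<n} - {j}) (dicke_mix n lam)"
    and i0: "i0 \<le> n" "odd i0" "lam i0 = 0"
    and i1: "i1 \<le> n" "even i1" "lam i1 = 0"
  shows "\<sigma> s s = dicke_mix n lam s s"
proof -
  let ?Z = "\<lambda>_::nat. False"
  let ?r = "dicke_mix n lam"
  define Dz where "Dz = \<sigma> ?Z ?Z - ?r ?Z ?Z"
  have alt: "\<And>s. s \<in> bits n \<Longrightarrow> \<sigma> s s - ?r s s = (-1)^(wt n s) * Dz"
    unfolding Dz_def by (rule diag_alt[OF H])
  have a0: "\<sigma> (cs i0) (cs i0) = - Dz"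
    using alt[OF cs_bits[OF i0(1)]] wt_cs[OF i0(1)] i0 rho_diag[OF cs_bits[OF i0(1)], of lam]
    by simp
  have a1: "\<sigma> (cs i1) (cs i1) = Dz"
    using alt[OF cs_bits[OF i1(1)]] wt_cs[OF i1(1)] i1 rho_diag[OF cs_bits[OF i1(1)], of lam]
    by simp
  have "Re (- Dz) \<ge> 0" using psd_diag(2)[OF d cs_bits[OF i0(1)]] a0 by simp
  moreover have "Re Dz \<ge> 0" using psd_diag(2)[OF d cs_bits[OF i1(1)]] a1 by simp
  moreover have "Im Dz = 0" using psd_diag(1)[OF d bits_zero] rho_diag[OF bits_zero, of n lam]
    by (simp add: Dz_def)
  ultimately have "Dz = 0" by (simp add: complex_eq_iff)
  show ?thesis
  proof (cases "s \<in> bits n")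
    case True then show ?thesis using alt[OF True] \<open>Dz = 0\<close> by simp
  next
    case False then show ?thesis using outside[OF d] by (simp add: dicke_mix_eq)
  qed
qed

definition sw :: "nat \<Rightarrow> nat \<Rightarrow> (nat \<Rightarrow> bool) \<Rightarrow> (nat \<Rightarrow> bool)" where
  "sw k l s = s(k := s l, l := s k)"

lemma sw_bits: "s \<in> bits n \<Longrightarrow> k < n \<Longrightarrow> l < n \<Longrightarrow> sw k l s \<in> bits n"
  by (auto simp: sw_def bits_def)

lemma wt_sw:
  assumes "k < n" "l < n"
  shows "wt n (sw k l s) = wt n s"
proof (cases "s k = s l")
  case True
  then have "sw k l s = s" by (intro ext) (simp add: sw_def)
  then show ?thesis by simp
next
  case False
  then have kl: "k \<noteq> l" by auto
  show ?thesis
  proof (cases "s k")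
    case True
    then have nl: "\<not> s l" using False by simp
    have e: "sw k l s = (s(k := False))(l := True)" using True nl by (intro ext) (simp add: sw_def)
    have "wt n ((s(k := False))(l := True)) = Suc (wt n (s(k := False)))"
      using assms(2) nl kl by (intro wt_upd_True) auto
    also have "\<dots> = wt n s" using wt_upd_False[of k n s] assms(1) True by simp
    finally show ?thesis using e by simp
  next
    case fk: False
    then have nl: "s l" using False by simp
    have e: "sw k l s = (s(l := False))(k := True)" using fk nl kl by (intro ext) (simp add: sw_def)
    have "wt n ((s(l := False))(k := True)) = Suc (wt n (s(l := False)))"
      using assms(1) fk kl by (intro wt_upd_True) auto
    also have "\<dots> = wt n s" using wt_upd_False[of l n s] assms(2) nl by simp
    finally show ?thesis using e by simp
  qed
qed

lemma perm_inv_aux: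
  assumes inv: "\<forall>s\<in>bits n. \<forall>k<n. \<forall>l<n. P (sw k l s) = P s"
  shows "\<forall>s s2. s \<in> bits n \<longrightarrow> s2 \<in> bits n \<longrightarrow> wt n s = wt n s2 \<longrightarrow>
           card {i. i < n \<and> s i \<noteq> s2 i} = d \<longrightarrow> P s = P s2"
proof (induction d rule: less_induct)
  case (less d)
  show ?case
  proof (intro allI impI)
    fix s s2 assume sb: "s \<in> bits n" and s2b: "s2 \<in> bits n" and w: "wt n s = wt n s2"
      and dd: "card {i. i < n \<and> s i \<noteq> s2 i} = d"
    show "P s = P s2"
    proof (cases "\<forall>i<n. s i = s2 i")
      case True
      have "s = s2"
      proof
        fix i show "s i = s2 i"
        proof (cases "i < n")
          case True then show ?thesis using \<open>\<forall>i<n. s i = s2 i\<close> by simp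
        next
          case False then show ?thesis using sb s2b by (simp add: bits_def)
        qed
      qed
      then show ?thesis by simp
    next
      case False
      have fin: "finite {i. i < n \<and> s2 i}" "finite {i. i < n \<and> s i}" by auto
      have ex1: "\<exists>k<n. s k \<and> \<not> s2 k"
      proof (rule ccontr)
        assume "\<not> (\<exists>k<n. s k \<and> \<not> s2 k)"
        then have sub: "{i. i < n \<and> s i} \<subseteq> {i. i < n \<and> s2 i}" by auto
        then have "{i. i < n \<and> s i} = {i. i < n \<and> s2 i}"
          using card_subset_eq[OF fin(1) sub] w by (simp add: wt_def)
        then show False using False by blast
      qed
      have ex2: "\<exists>l<n. \<not> s l \<and> s2 l"
      proof (rule ccontr)
        assume "\<not> (\<exists>l<n. \<not> s l \<and> s2 l)"
        then have sub: "{i. i < n \<and> s2 i} \<subseteq> {i. i < n \<and> s i}" by auto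
        then have "{i. i < n \<and> s2 i} = {i. i < n \<and> s i}"
          using card_subset_eq[OF fin(2) sub] w by (simp add: wt_def)
        then show False using False by blast
      qed
      obtain k where k: "k < n" "s k" "\<not> s2 k" using ex1 by blast
      obtain l where l: "l < n" "\<not> s l" "s2 l" using ex2 by blast
      have kl: "k \<noteq> l" using k l by auto
      define s1 where "s1 = sw k l s"
      have s1b: "s1 \<in> bits n" unfolding s1_def using sb k(1) l(1) by (rule sw_bits)
      have w1: "wt n s1 = wt n s2" unfolding s1_def using wt_sw[OF k(1) l(1)] w by simp
      have sub: "{i. i < n \<and> s1 i \<noteq> s2 i} \<subseteq> {i. i < n \<and> s i \<noteq> s2 i} - {k}"
        using k l kl by (auto simp: s1_def sw_def)
      have "card {i. i < n \<and> s1 i \<noteq> s2 i} \<le> card ({i. i < n \<and> s i \<noteq> s2 i} - {k})"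
        by (rule card_mono[OF _ sub]) auto
      also have "\<dots> < card {i. i < n \<and> s i \<noteq> s2 i}"
        using k by (intro card_Diff1_less) auto
      finally have lt: "card {i. i < n \<and> s1 i \<noteq> s2 i} < d" using dd by simp
      have "P s1 = P s2" using less.IH[OF lt] s1b s2b w1 by blast
      moreover have "P s1 = P s" unfolding s1_def using inv sb k(1) l(1) by blast
      ultimately show ?thesis by simp
    qed
  qed
qed

lemma perm_inv:
  assumes "\<forall>s\<in>bits n. \<forall>k<n. \<forall>l<n. P (sw k l s) = P s"
    and "s \<in> bits n" "s2 \<in> bits n" "wt n s = wt n s2"
  shows "P s = P s2"
  using perm_inv_aux[OF assms(1)] assms(2-4) by blast



definition qd :: "op \<Rightarrow> (nat \<Rightarrow> bool) \<Rightarrow> (nat \<Rightarrow> bool) \<Rightarrow> complex" where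
  "qd \<sigma> u w = \<sigma> u u - \<sigma> u w - \<sigma> w u + \<sigma> w w"

lemma qd_psd:
  assumes "density n \<sigma>" "u \<in> bits n" "w \<in> bits n"
  shows "Im (qd \<sigma> u w) = 0" "Re (qd \<sigma> u w) \<ge> 0"
proof -
  have "quad n \<sigma> (\<lambda>s. pt u 0 s + pt u 1 s + pt w (-1) s) = qd \<sigma> u w"
    unfolding quad3[OF assms(2,2,3)] qd_def by simp
  then show "Im (qd \<sigma> u w) = 0" "Re (qd \<sigma> u w) \<ge> 0"
    using psd_quad[OF assms(1)] by metis+
qed

lemma qd_kernel:
  assumes "density n \<sigma>" "u \<in> bits n" "w \<in> bits n" "qd \<sigma> u w = 0"
  shows "\<sigma> t u = \<sigma> t w"
proof (cases "t \<in> bits n")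
  case True
  have "1 * \<sigma> t u + (-1) * \<sigma> t w = 0"
    using assms(4) by (intro psd_kernel[OF assms(1) True assms(2,3)]) (simp add: qd_def)
  then show ?thesis by simp
next
  case False then show ?thesis using outside[OF assms(1)] by simp
qed

lemma qd_rho:
  assumes "wt n u = wt n w" "u \<in> bits n" "w \<in> bits n"
  shows "qd (dicke_mix n lam) u w = 0"
  using assms by (simp add: qd_def dicke_mix_eq)

lemma sw_upd: "j \<noteq> k \<Longrightarrow> j \<noteq> l \<Longrightarrow> sw k l (u(j := v)) = (sw k l u)(j := v)"
  by (intro ext) (simp add: sw_def)

lemma sym_step:
  fixes \<sigma> :: op
  assumes n: "n \<ge> 3" and d: "density n \<sigma>"
    and H: "\<forall>j<n. ptrace n ({0..<n} - {j}) \<sigma> = ptrace n ({0..<n} - {j}) (dicke_mix n lam)"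
    and sb: "s \<in> bits n" and kl: "k < n" "l < n"
  shows "qd \<sigma> s (sw k l s) = 0"
proof -
  let ?r = "dicke_mix n lam"
  obtain j where j: "j < 3" "j \<noteq> k" "j \<noteq> l"
  proof -
    have "\<exists>j::nat. j < 3 \<and> j \<noteq> k \<and> j \<noteq> l" by presburger
    then show ?thesis using that by blast
  qed
  have jn: "j < n" using j n by simp
  define u where "u = s(j := False)"
  define u' where "u' = sw k l u"
  have ub: "u \<in> bits n" unfolding u_def using sb by (rule bits_upd_False)
  have u'b: "u' \<in> bits n" unfolding u'_def using ub kl by (rule sw_bits)
  have uj: "\<not> u j" by (simp add: u_def)
  have u'j: "\<not> u' j" using uj j by (simp add: u'_def sw_def)
  have sw1: "sw k l (u(j := True)) = u'(j := True)" unfolding u'_def using j(2,3) by (rule sw_upd)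
  have ujb: "u(j := True) \<in> bits n" using ub jn by (rule bits_upd_True)
  have u'jb: "u'(j := True) \<in> bits n" using u'b jn by (rule bits_upd_True)
  have wu: "wt n u' = wt n u" unfolding u'_def using kl by (rule wt_sw)
  have wu1: "wt n (u'(j := True)) = wt n (u(j := True))"
    using wt_upd_True[of j n u, OF jn uj] wt_upd_True[of j n u', OF jn u'j] wu by simp
  have f1: "\<sigma> u u + \<sigma> (u(j := True)) (u(j := True)) = ?r u u + ?r (u(j := True)) (u(j := True))"
    by (rule flip[OF H jn ub ub uj uj])
  have f2: "\<sigma> u u' + \<sigma> (u(j := True)) (u'(j := True)) = ?r u u' + ?r (u(j := True)) (u'(j := True))"
    by (rule flip[OF H jn ub u'b uj u'j])
  have f3: "\<sigma> u' u + \<sigma> (u'(j := True)) (u(j := True)) = ?r u' u + ?r (u'(j := True)) (u(j := True))"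
    by (rule flip[OF H jn u'b ub u'j uj])
  have f4: "\<sigma> u' u' + \<sigma> (u'(j := True)) (u'(j := True)) = ?r u' u' + ?r (u'(j := True)) (u'(j := True))"
    by (rule flip[OF H jn u'b u'b u'j u'j])
  have "qd \<sigma> u u' + qd \<sigma> (u(j := True)) (u'(j := True))
      = qd ?r u u' + qd ?r (u(j := True)) (u'(j := True))"
  proof -
    let ?U = "u(j := True)" and ?V = "u'(j := True)"
    have "qd \<sigma> u u' + qd \<sigma> ?U ?V = (\<sigma> u u + \<sigma> ?U ?U) - (\<sigma> u u' + \<sigma> ?U ?V)
       - (\<sigma> u' u + \<sigma> ?V ?U) + (\<sigma> u' u' + \<sigma> ?V ?V)"
      by (simp add: qd_def algebra_simps)
    also have "\<dots> = (?r u u + ?r ?U ?U) - (?r u u' + ?r ?U ?V)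
       - (?r u' u + ?r ?V ?U) + (?r u' u' + ?r ?V ?V)"
      unfolding f1 f2 f3 f4 by (rule refl)
    also have "\<dots> = qd ?r u u' + qd ?r ?U ?V"
      by (simp add: qd_def algebra_simps)
    finally show ?thesis .
  qed
  also have "\<dots> = 0" using qd_rho[OF wu[symmetric] ub u'b] qd_rho[OF wu1[symmetric] ujb u'jb] by simp
  finally have sum0: "qd \<sigma> u u' + qd \<sigma> (u(j := True)) (u'(j := True)) = 0" .
  have A1: "Im (qd \<sigma> u u') = 0" "Re (qd \<sigma> u u') \<ge> 0" using qd_psd[OF d ub u'b] by auto
  have A2: "Im (qd \<sigma> (u(j := True)) (u'(j := True))) = 0"
     "Re (qd \<sigma> (u(j := True)) (u'(j := True))) \<ge> 0" using qd_psd[OF d ujb u'jb] by auto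
  have R: "Re (qd \<sigma> u u') + Re (qd \<sigma> (u(j := True)) (u'(j := True))) = 0"
    using arg_cong[OF sum0, of Re] by simp
  have z1: "qd \<sigma> u u' = 0" using A1 A2 R by (simp add: complex_eq_iff)
  have z2: "qd \<sigma> (u(j := True)) (u'(j := True)) = 0" using A1 A2 R by (simp add: complex_eq_iff)
  show ?thesis
  proof (cases "s j")
    case True
    have "s = u(j := True)" using True by (intro ext) (simp add: u_def)
    then show ?thesis using z2 sw1 by simp
  next
    case False
    have "s = u" using False by (intro ext) (simp add: u_def)
    then show ?thesis using z1 by (simp add: u'_def)
  qed
qed

lemma sym_all:
  fixes \<sigma> :: op
  assumes n: "n \<ge> 3" and d: "density n \<sigma>"
    and H: "\<forall>j<n. ptrace n ({0..<n} - {j}) \<sigma> = ptrace n ({0..<n} - {j}) (dicke_mix n lam)"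
    and b: "s \<in> bits n" "t \<in> bits n" "s2 \<in> bits n" "t2 \<in> bits n"
    and w: "wt n s = wt n s2" "wt n t = wt n t2"
  shows "\<sigma> s t = \<sigma> s2 t2"
proof -
  have c1: "\<sigma> x (sw k l y) = \<sigma> x y" if "y \<in> bits n" "k < n" "l < n" for x y k l
    using qd_kernel[OF d that(1) sw_bits[OF that] sym_step[OF n d H that]] by simp
  have c2: "\<sigma> (sw k l y) x = \<sigma> y x" if "y \<in> bits n" "k < n" "l < n" for x y k l
    using c1[OF that, of x] herm[OF d, of x y] herm[OF d, of x "sw k l y"] by simp
  have "\<sigma> s t = \<sigma> s2 t"
    by (rule perm_inv[where P = "\<lambda>y. \<sigma> y t", OF _ b(1) b(3) w(1)]) (use c2 in blast)
  also have "\<dots> = \<sigma> s2 t2"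
    by (rule perm_inv[where P = "\<lambda>y. \<sigma> s2 y", OF _ b(2) b(4) w(2)]) (use c1 in blast)
  finally show ?thesis .
qed



lemma zero_diag:
  fixes \<tau> :: op
  assumes d: "density n \<tau>" and z: "\<tau> u u = 0"
  shows "\<tau> r u = 0" "\<tau> u r = 0"
proof -
  show r: "\<tau> r u = 0"
  proof (cases "r \<in> bits n \<and> u \<in> bits n")
    case True
    have "1 * \<tau> r u + 0 * \<tau> r u = 0"
      using z by (intro psd_kernel[OF d]) (simp_all add: True)
    then show ?thesis by simp
  next
    case False then show ?thesis using outside[OF d] by blast
  qed
  show "\<tau> u r = 0" using r herm[OF d, of r u] by simp
qed

lemma wt_n: "s \<in> bits n \<Longrightarrow> wt n s = n \<Longrightarrow> s = cs n"
proof
  fix k assume sb: "s \<in> bits n" and w: "wt n s = n"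
  have sub: "{j. j < n \<and> s j} \<subseteq> {..<n}" by auto
  have "{j. j < n \<and> s j} = {..<n}"
    using card_subset_eq[OF _ sub] w by (simp add: wt_def)
  then show "s k = cs n k" using bits_lt[OF sb, of k] by (auto simp: cs_def)
qed

lemma cs_upd0: "0 < a \<Longrightarrow> ((cs a)(0 := False))(0 := True) = cs a"
  by (intro ext) (simp add: cs_def)

lemma cs_upd0': "0 < a \<Longrightarrow> (cs a)(0 := True) = cs a"
  by (intro ext) (simp add: cs_def)

lemma uniq:
  fixes \<sigma> :: op
  assumes n: "n \<ge> 2"
    and lam: "\<forall>i\<le>n. lam i \<ge> 0" "(\<Sum>i\<le>n. lam i) = 1"
    and d: "density n \<sigma>"
    and H: "\<forall>j<n. ptrace n ({0..<n} - {j}) \<sigma> = ptrace n ({0..<n} - {j}) (dicke_mix n lam)"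
    and c1: "lam 0 * lam n = 0"
    and i0: "i0 \<le> n" "odd i0" "lam i0 = 0"
    and i1: "i1 \<le> n" "even i1" "lam i1 = 0"
  shows "\<sigma> = dicke_mix n lam"
proof (intro ext)
  fix s t
  let ?r = "dicke_mix n lam"
  have dr: "density n ?r" by (rule density_dicke_mix[OF lam])
  have dg: "\<And>x. \<sigma> x x = ?r x x" by (rule diag_eq[OF d H i0 i1])
  show "\<sigma> s t = ?r s t"
  proof (cases "s \<in> bits n \<and> t \<in> bits n")
    case False
    have "s \<notin> bits n \<or> t \<notin> bits n" using False by blast
    then show ?thesis using outside[OF d] outside[OF dr] by metis
  next
    case True
    then have sb: "s \<in> bits n" and tb: "t \<in> bits n" by auto
    show ?thesis
    proof (cases "s = t")
      case True then show ?thesis using dg by simp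
    next
      case st: False
      show ?thesis
      proof (cases "n = 2")
        case True
        have l1: "lam 1 = 0" using i0 True by (cases "i0 = 1") (auto, presburger)
        have "\<sigma> s s = 0 \<or> \<sigma> t t = 0"
        proof (rule ccontr)
          assume "\<not> (\<sigma> s s = 0 \<or> \<sigma> t t = 0)"
          then have nz: "lam (wt n s) \<noteq> 0" "lam (wt n t) \<noteq> 0" using dg sb tb
            by (auto simp: dicke_mix_eq)
          have ws: "wt n s = 0 \<or> wt n s = 2" and wt: "wt n t = 0 \<or> wt n t = 2"
            using wt_le[of n s] wt_le[of n t] nz l1 True by (auto simp: le_Suc_eq numeral_2_eq_2)
          show False
          proof -
            { assume "wt n s = 0" "wt n t = 0"
              then have False using wt0[OF sb] wt0[OF tb] st by simp }
            moreover
            { assume "wt n s = 2" "wt n t = 2"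
              then have False using wt_n[OF sb] wt_n[OF tb] st True by simp }
            moreover
            { assume "wt n s = 0" "wt n t = 2"
              then have False using c1 nz True by simp }
            moreover
            { assume "wt n s = 2" "wt n t = 0"
              then have False using c1 nz True by simp }
            ultimately show False using ws wt by fastforce
          qed
        qed
        then show ?thesis
        proof
          assume z: "\<sigma> s s = 0"
          then have "?r s s = 0" using dg by simp
          then show ?thesis using zero_diag(2)[OF d z] zero_diag(2)[OF dr] by simp
        next
          assume z: "\<sigma> t t = 0"
          then have "?r t t = 0" using dg by simp
          then show ?thesis using zero_diag(1)[OF d z] zero_diag(1)[OF dr] by simp
        qed
      next
        case False
        then have n3: "n \<ge> 3" using n by simp
        show ?thesis
        proof (cases "wt n s = wt n t")
          case True
          have "\<sigma> s t = \<sigma> s s" by (rule sym_all[OF n3 d H sb tb sb sb refl True[symmetric]])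
          then show ?thesis using dg True sb tb by (simp add: dicke_mix_eq)
        next
          case wne: False
          have r0: "?r s t = 0" using wne by (simp add: dicke_mix_eq)
          have csym: "\<And>x y. x \<in> bits n \<Longrightarrow> y \<in> bits n \<Longrightarrow>
               \<sigma> x y = \<sigma> (cs (wt n x)) (cs (wt n y))"
          proof -
            fix x y assume xb: "x \<in> bits n" and yb: "y \<in> bits n"
            show "\<sigma> x y = \<sigma> (cs (wt n x)) (cs (wt n y))"
              by (rule sym_all[OF n3 d H xb yb cs_bits[OF wt_le] cs_bits[OF wt_le]])
                 (simp_all add: wt_cs[OF wt_le])
          qed
          have rdiff: "\<And>x y. wt n x \<noteq> wt n y \<Longrightarrow> ?r x y = 0" by (simp add: dicke_mix_eq)
          have "\<sigma> s t = 0"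
          proof (cases "lam 0 = 0")
            case True
            have "\<forall>x y. x \<in> bits n \<longrightarrow> y \<in> bits n \<longrightarrow> wt n x \<noteq> wt n y \<longrightarrow>
                   min (wt n x) (wt n y) = m \<longrightarrow> \<sigma> x y = 0" for m
            proof (induction m)
              case 0
              show ?case
              proof (intro allI impI)
                fix x y assume xb: "x \<in> bits n" and yb: "y \<in> bits n"
                  and "wt n x \<noteq> wt n y" and m: "min (wt n x) (wt n y) = 0"
                show "\<sigma> x y = 0"
                proof (cases "wt n x = 0")
                  case True
                  have "\<sigma> x x = 0" using dg xb True \<open>lam 0 = 0\<close> by (simp add: dicke_mix_eq)
                  then show ?thesis by (rule zero_diag(2)[OF d])
                next
                  case False
                  then have "wt n y = 0" using m by simp
                  then have "\<sigma> y y = 0" using dg yb \<open>lam 0 = 0\<close> by (simp add: dicke_mix_eq)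
                  then show ?thesis by (rule zero_diag(1)[OF d])
                qed
              qed
            next
              case (Suc m)
              show ?case
              proof (intro allI impI)
                fix x y assume xb: "x \<in> bits n" and yb: "y \<in> bits n"
                  and ne: "wt n x \<noteq> wt n y" and m: "min (wt n x) (wt n y) = Suc m"
                define a where "a = wt n x"
                define b where "b = wt n y"
                have ab: "a > 0" "b > 0" "a \<le> n" "b \<le> n" "a \<noteq> b"
                  using m ne wt_le[of n x] wt_le[of n y] by (auto simp: a_def b_def)
                define x' where "x' = (cs a)(0 := False)"
                define y' where "y' = (cs b)(0 := False)"
                have n0: "0 < n" using n by simp
                have x'b: "x' \<in> bits n" unfolding x'_def by (rule bits_upd_False[OF cs_bits[OF ab(3)]])
                have y'b: "y' \<in> bits n" unfolding y'_def by (rule bits_upd_False[OF cs_bits[OF ab(4)]])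
                have wx: "wt n (cs a) = Suc (wt n x')" unfolding x'_def
                  by (rule wt_upd_False) (use n0 ab in \<open>simp_all add: cs_def\<close>)
                have wy: "wt n (cs b) = Suc (wt n y')" unfolding y'_def
                  by (rule wt_upd_False) (use n0 ab in \<open>simp_all add: cs_def\<close>)
                have wx': "wt n x' = a - 1" using wx wt_cs[OF ab(3)] by simp
                have wy': "wt n y' = b - 1" using wy wt_cs[OF ab(4)] by simp
                have "\<sigma> x' y' = 0"
                  using Suc.IH x'b y'b wx' wy' ab m by (auto simp: a_def b_def)
                moreover have f: "\<sigma> x' y' + \<sigma> (x'(0 := True)) (y'(0 := True))
                    = ?r x' y' + ?r (x'(0 := True)) (y'(0 := True))"
                  by (rule flip[OF H n0 x'b y'b]) (simp_all add: x'_def y'_def)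
                moreover have "x'(0 := True) = cs a" "y'(0 := True) = cs b"
                  unfolding x'_def y'_def using ab by (simp_all add: cs_upd0')
                moreover have "?r x' y' = 0" using wx' wy' ab by (intro rdiff) simp
                moreover have "?r (cs a) (cs b) = 0"
                  using wt_cs[OF ab(3)] wt_cs[OF ab(4)] ab by (intro rdiff) simp
                ultimately have "\<sigma> (cs a) (cs b) = 0" by simp
                then show "\<sigma> x y = 0" using csym[OF xb yb] by (simp add: a_def b_def)
              qed
            qed
            from this[of "min (wt n s) (wt n t)", rule_format, OF sb tb wne refl] show ?thesis .
          next
            case False
            then have ln: "lam n = 0" using c1 by simp
            have "\<forall>x y. x \<in> bits n \<longrightarrow> y \<in> bits n \<longrightarrow> wt n x \<noteq> wt n y \<longrightarrow>
                   max (wt n x) (wt n y) = n - m \<longrightarrow> \<sigma> x y = 0" for m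
            proof (induction m)
              case 0
              show ?case
              proof (intro allI impI)
                fix x y assume xb: "x \<in> bits n" and yb: "y \<in> bits n"
                  and "wt n x \<noteq> wt n y" and m: "max (wt n x) (wt n y) = n - 0"
                show "\<sigma> x y = 0"
                proof (cases "wt n x = n")
                  case True
                  have "\<sigma> x x = 0" using dg xb True ln by (simp add: dicke_mix_eq)
                  then show ?thesis by (rule zero_diag(2)[OF d])
                next
                  case False
                  then have "wt n y = n" using m by (simp add: max_def split: if_splits)
                  then have "\<sigma> y y = 0" using dg yb ln by (simp add: dicke_mix_eq)
                  then show ?thesis by (rule zero_diag(1)[OF d])
                qed
              qed
            next
              case (Suc m)
              show ?case
              proof (intro allI impI)
                fix x y assume xb: "x \<in> bits n" and yb: "y \<in> bits n"
                  and ne: "wt n x \<noteq> wt n y" and m: "max (wt n x) (wt n y) = n - Suc m"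
                define a where "a = wt n x"
                define b where "b = wt n y"
                have ab: "a < n" "b < n" "a \<noteq> b" "Suc m < n"
                  using m ne wt_le[of n x] wt_le[of n y] by (auto simp: a_def b_def max_def split: if_splits)
                define j where "j = n - 1"
                have jn: "j < n" using ab by (simp add: j_def)
                have xj: "\<not> cs a j" "\<not> cs b j" using ab by (auto simp: cs_def j_def)
                have ba: "cs a \<in> bits n" "cs b \<in> bits n" using ab by (simp_all add: cs_bits)
                have wx: "wt n ((cs a)(j := True)) = Suc a"
                  using wt_upd_True[of j n "cs a", OF jn xj(1)] wt_cs ab by simp
                have wy: "wt n ((cs b)(j := True)) = Suc b"
                  using wt_upd_True[of j n "cs b", OF jn xj(2)] wt_cs ab by simp
                have "\<sigma> ((cs a)(j := True)) ((cs b)(j := True)) = 0"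
                proof (rule Suc.IH[rule_format, OF bits_upd_True[OF ba(1) jn] bits_upd_True[OF ba(2) jn]])
                  show "wt n ((cs a)(j := True)) \<noteq> wt n ((cs b)(j := True))" using wx wy ab by simp
                  have "max a b = n - Suc m" using m by (simp add: a_def b_def)
                  then show "max (wt n ((cs a)(j := True))) (wt n ((cs b)(j := True))) = n - m"
                    using wx wy ab by simp
                qed
                moreover have "\<sigma> (cs a) (cs b) + \<sigma> ((cs a)(j := True)) ((cs b)(j := True))
                    = ?r (cs a) (cs b) + ?r ((cs a)(j := True)) ((cs b)(j := True))"
                  by (rule flip[OF H jn ba xj])
                moreover have "?r (cs a) (cs b) = 0"
                  using wt_cs ab by (intro rdiff) simp
                moreover have "?r ((cs a)(j := True)) ((cs b)(j := True)) = 0"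
                  using wx wy ab by (intro rdiff) simp
                ultimately have "\<sigma> (cs a) (cs b) = 0" by simp
                then show "\<sigma> x y = 0" using csym[OF xb yb] by (simp add: a_def b_def)
              qed
            qed
            moreover have "max (wt n s) (wt n t) = n - (n - max (wt n s) (wt n t))"
              using wt_le[of n s] wt_le[of n t] by simp
            ultimately show ?thesis using sb tb wne by metis
          qed
          then show ?thesis using r0 by simp
        qed
      qed
    qed
  qed
qed



definition CC :: "nat \<Rightarrow> nat set \<Rightarrow> (nat \<Rightarrow> bool) set" where
  "CC n S = {c \<in> bits n. \<forall>i\<in>S. \<not> c i}"

lemma parity_sum:
  assumes "j < n" "j \<notin> S"
  shows "(\<Sum>c\<in>CC n S. (-1::complex)^(wt n c)) = 0"
proof -
  let ?C0 = "{c \<in> CC n S. \<not> c j}" and ?C1 = "{c \<in> CC n S. c j}"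
  have fin: "finite (CC n S)" by (simp add: CC_def)
  have un: "CC n S = ?C0 \<union> ?C1" by auto
  have dis: "?C0 \<inter> ?C1 = {}" by auto
  have img: "?C1 = (\<lambda>c. c(j := True)) ` ?C0"
  proof
    show "?C1 \<subseteq> (\<lambda>c. c(j := True)) ` ?C0"
    proof
      fix c assume c: "c \<in> ?C1"
      have m: "c(j := False) \<in> ?C0" using c by (auto simp: CC_def bits_def)
      have e: "c = (\<lambda>c. c(j := True)) (c(j := False))" using c by (intro ext) simp
      show "c \<in> (\<lambda>c. c(j := True)) ` ?C0" using image_eqI[where f="\<lambda>c. c(j := True)", OF e m] .
    qed
    show "(\<lambda>c. c(j := True)) ` ?C0 \<subseteq> ?C1"
      using assms by (auto simp: CC_def bits_def split: if_splits)
  qed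
  have inj: "inj_on (\<lambda>c. c(j := True)) ?C0"
  proof (rule inj_onI)
    fix x y assume x: "x \<in> ?C0" and y: "y \<in> ?C0" and e: "x(j := True) = y(j := True)"
    show "x = y"
    proof
      fix i show "x i = y i"
      proof (cases "i = j")
        case True then show ?thesis using x y by simp
      next
        case False then show ?thesis using fun_cong[OF e, of i] by simp
      qed
    qed
  qed
  have "(\<Sum>c\<in>?C1. (-1::complex)^(wt n c)) = (\<Sum>c\<in>?C0. (-1::complex)^(wt n (c(j := True))))"
    unfolding img by (rule sum.reindex[OF inj, unfolded comp_def])
  also have "\<dots> = (\<Sum>c\<in>?C0. - ((-1::complex)^(wt n c)))"
    by (rule sum.cong) (simp_all add: wt_upd_True[OF assms(1)])
  finally have s1: "(\<Sum>c\<in>?C1. (-1::complex)^(wt n c)) = - (\<Sum>c\<in>?C0. (-1::complex)^(wt n c))"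
    by (simp add: sum_negf)
  have "(\<Sum>c\<in>CC n S. (-1::complex)^(wt n c)) = (\<Sum>c\<in>?C0. (-1::complex)^(wt n c)) + (\<Sum>c\<in>?C1. (-1::complex)^(wt n c))"
    by (subst un, rule sum.union_disjoint) (use fin dis in auto)
  then show ?thesis using s1 by simp
qed

lemma wt_union:
  assumes "\<forall>i. \<not> (a i \<and> c i)"
  shows "wt n (\<lambda>i. a i \<or> c i) = wt n a + wt n c"
proof -
  have "{i. i < n \<and> (a i \<or> c i)} = {i. i < n \<and> a i} \<union> {i. i < n \<and> c i}" by auto
  moreover have "{i. i < n \<and> a i} \<inter> {i. i < n \<and> c i} = {}" using assms by auto
  ultimately show ?thesis unfolding wt_def by (simp add: card_Un_disjoint)
qed

lemma ptrace_CC: "ptrace n S \<sigma> a b =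
     (if (\<forall>i. a i \<longrightarrow> i \<in> S \<and> i < n) \<and> (\<forall>i. b i \<longrightarrow> i \<in> S \<and> i < n)
      then (\<Sum>c\<in>CC n S. \<sigma> (\<lambda>i. a i \<or> c i) (\<lambda>i. b i \<or> c i)) else 0)"
  unfolding ptrace_def CC_def by simp

lemma alt_construction:
  assumes n: "n \<ge> 1" and lam: "(\<Sum>i\<le>n. lam i) = 1"
    and e: "e \<noteq> 0" and pos: "\<forall>i\<le>n. lam i + e * (-1)^i * real (n choose i) \<ge> 0"
  defines "lam' \<equiv> \<lambda>i. lam i + e * (-1)^i * real (n choose i)"
  shows "density n (dicke_mix n lam')"
    and "dicke_mix n lam' \<noteq> dicke_mix n lam"
    and "\<And>S j. j < n \<Longrightarrow> j \<notin> S \<Longrightarrow> ptrace n S (dicke_mix n lam') = ptrace n S (dicke_mix n lam)"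
proof -
  have "(\<Sum>i\<le>n. lam' i) = (\<Sum>i\<le>n. lam i) + e * (\<Sum>i\<le>n. (-1)^i * real (n choose i))"
    unfolding lam'_def by (simp add: sum.distrib sum_distrib_left mult.assoc)
  also have "\<dots> = 1" using lam choose_alternating_sum[where 'a=real, of n] n by simp
  finally show "density n (dicke_mix n lam')"
    using pos by (intro density_dicke_mix) (simp_all add: lam'_def)
  show "dicke_mix n lam' \<noteq> dicke_mix n lam"
  proof
    assume "dicke_mix n lam' = dicke_mix n lam"
    then have "dicke_mix n lam' (\<lambda>_. False) (\<lambda>_. False) = dicke_mix n lam (\<lambda>_. False) (\<lambda>_. False)"
      by simp
    moreover have "wt n (\<lambda>_. False) = 0" by (simp add: wt_def)
    ultimately show False using e bits_zero[of n] by (simp add: dicke_mix_eq lam'_def)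
  qed
  fix S j assume j: "j < n" "j \<notin> S"
  show "ptrace n S (dicke_mix n lam') = ptrace n S (dicke_mix n lam)"
  proof (intro ext)
    fix a b
    show "ptrace n S (dicke_mix n lam') a b = ptrace n S (dicke_mix n lam) a b"
    proof (cases "(\<forall>i. a i \<longrightarrow> i \<in> S \<and> i < n) \<and> (\<forall>i. b i \<longrightarrow> i \<in> S \<and> i < n)")
      case False then show ?thesis by (simp only: ptrace_CC if_False)
    next
      case True
      have diff: "dicke_mix n lam' (\<lambda>i. a i \<or> c i) (\<lambda>i. b i \<or> c i) =
           dicke_mix n lam (\<lambda>i. a i \<or> c i) (\<lambda>i. b i \<or> c i) +
           (if wt n a = wt n b then complex_of_real (e * (-1)^(wt n a)) else 0) * (-1)^(wt n c)"
        if c: "c \<in> CC n S" for c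
      proof -
        have ab: "(\<lambda>i. a i \<or> c i) \<in> bits n" "(\<lambda>i. b i \<or> c i) \<in> bits n"
          using True c by (auto simp: CC_def bits_def)
        have wa: "wt n (\<lambda>i. a i \<or> c i) = wt n a + wt n c"
          using True c by (intro wt_union) (auto simp: CC_def)
        have wb: "wt n (\<lambda>i. b i \<or> c i) = wt n b + wt n c"
          using True c by (intro wt_union) (auto simp: CC_def)
        have bn: "real (n choose (wt n a + wt n c)) \<noteq> 0"
          using wa wt_le[of n "\<lambda>i. a i \<or> c i"] by simp
        show ?thesis using ab bn
          by (simp add: dicke_mix_eq wa wb lam'_def field_simps power_add)
      qed
      have "(\<Sum>c\<in>CC n S. dicke_mix n lam' (\<lambda>i. a i \<or> c i) (\<lambda>i. b i \<or> c i)) =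
          (\<Sum>c\<in>CC n S. dicke_mix n lam (\<lambda>i. a i \<or> c i) (\<lambda>i. b i \<or> c i)) +
          (if wt n a = wt n b then complex_of_real (e * (-1)^(wt n a)) else 0) *
          (\<Sum>c\<in>CC n S. (-1)^(wt n c))"
        by (simp add: diff sum.distrib sum_distrib_left)
      then show ?thesis using parity_sum[OF j] True by (simp add: ptrace_CC)
    qed
  qed
qed



lemma quad_delta:
  fixes e :: complex
  assumes "p \<in> bits n" "q \<in> bits n"
  shows "(\<Sum>s\<in>bits n. \<Sum>t\<in>bits n. cnj (v s) * (if s = p \<and> t = q then e else 0) * v t)
     = cnj (v p) * e * v q"
proof -
  have "(\<Sum>t\<in>bits n. cnj (v s) * (if s = p \<and> t = q then e else 0) * v t)
      = (if s = p then cnj (v p) * e * v q else 0)" for s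
  proof (cases "s = p")
    case True
    have "(\<Sum>t\<in>bits n. cnj (v s) * (if s = p \<and> t = q then e else 0) * v t)
       = (\<Sum>t\<in>bits n. if t = q then cnj (v p) * e * v q else 0)"
      using True by (intro sum.cong) auto
    then show ?thesis using True assms(2) by (simp add: sum.delta)
  qed simp
  then show ?thesis using assms(1) by (simp add: sum.delta)
qed

lemma dicke0: "dicke n 0 t = (if t = (\<lambda>_. False) then 1 else 0)"
proof -
  have "(t \<in> bits n \<and> card {j. j < n \<and> t j} = 0) \<longleftrightarrow> t = (\<lambda>_. False)"
    using wt0[of t n] bits_zero[of n] by (auto simp: wt_def)
  then show ?thesis by (simp add: dicke_def)
qed

lemma dicken: "dicke n n t = (if t = cs n then 1 else 0)"
proof -
  have "(t \<in> bits n \<and> card {j. j < n \<and> t j} = n) \<longleftrightarrow> t = cs n"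
    using wt_n[of t n] cs_bits[of n n] wt_cs[of n n] by (auto simp: wt_def)
  then show ?thesis by (simp add: dicke_def)
qed

lemma sum_pt:
  fixes v :: "(nat \<Rightarrow> bool) \<Rightarrow> complex"
  assumes "p \<in> bits n"
  shows "(\<Sum>t\<in>bits n. (if t = p then 1 else 0) * v t) = v p"
proof -
  have "(\<Sum>t\<in>bits n. (if t = p then 1 else 0) * v t) = (\<Sum>t\<in>bits n. if t = p then v t else 0)"
    by (intro sum.cong) auto
  then show ?thesis using assms by (simp add: sum.delta)
qed

lemma real_ineq:
  fixes l0 ln A B w :: real
  assumes "l0 \<ge> 0" "ln \<ge> 0" "A \<ge> 0" "B \<ge> 0" "w \<ge> - (A * B)"
  shows "l0 * A^2 + ln * B^2 + 2 * sqrt (l0 * ln) * w \<ge> 0"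
proof -
  have s: "sqrt (l0 * ln) \<ge> 0" using assms(1,2) by simp
  have "2 * sqrt (l0 * ln) * w \<ge> 2 * sqrt (l0 * ln) * (- (A * B))"
    using assms(5) s by (intro mult_left_mono) auto
  moreover have "l0 * A^2 + ln * B^2 + 2 * sqrt (l0 * ln) * (- (A * B)) = (sqrt l0 * A - sqrt ln * B)^2"
    using assms(1,2) by (simp add: power2_eq_square real_sqrt_mult algebra_simps)
  moreover have "(sqrt l0 * A - sqrt ln * B)^2 \<ge> 0" by simp
  ultimately show ?thesis by linarith
qed

lemma cons_i:
  assumes n: "n \<ge> 1" and lam: "\<forall>i\<le>n. lam i \<ge> 0" "(\<Sum>i\<le>n. lam i) = 1"
    and c: "lam 0 * lam n \<noteq> 0"
  shows "\<exists>\<sigma>. density n \<sigma> \<and> \<sigma> \<noteq> dicke_mix n lam \<and>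
     (\<forall>S j. j < n \<longrightarrow> j \<notin> S \<longrightarrow> ptrace n S \<sigma> = ptrace n S (dicke_mix n lam))"
proof -
  let ?r = "dicke_mix n lam"
  let ?Z = "\<lambda>_::nat. False" and ?O = "cs n"
  define ep where "ep = sqrt (lam 0 * lam n)"
  define E where "E = (\<lambda>s t. if (s = ?Z \<and> t = ?O) \<or> (s = ?O \<and> t = ?Z) then complex_of_real ep else 0)"
  define \<sigma> where "\<sigma> = (\<lambda>s t. ?r s t + E s t)"
  have dr: "density n ?r" by (rule density_dicke_mix[OF lam])
  have ZO: "?Z \<noteq> ?O" using n by (metis cs_def less_numeral_extra(3) less_le_trans zero_less_one)
  have Zb: "?Z \<in> bits n" by (rule bits_zero)
  have Ob: "?O \<in> bits n" by (rule cs_bits) simp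
  have l0: "lam 0 \<ge> 0" "lam n \<ge> 0" using lam(1) by auto
  have ep0: "ep > 0" unfolding ep_def using c l0 by (simp add: zero_less_mult_iff order_le_less)
  have Esplit: "E s t = (if s = ?Z \<and> t = ?O then complex_of_real ep else 0) +
                        (if s = ?O \<and> t = ?Z then complex_of_real ep else 0)" for s t
    using ZO by (auto simp: E_def)
  have qE: "(\<Sum>s\<in>bits n. \<Sum>t\<in>bits n. cnj (v s) * E s t * v t) =
      cnj (v ?Z) * complex_of_real ep * v ?O + cnj (v ?O) * complex_of_real ep * v ?Z" for v
    unfolding Esplit by (simp add: distrib_left distrib_right sum.distrib quad_delta[OF Zb Ob] quad_delta[OF Ob Zb])
  have qs: "quad n \<sigma> v = quad n ?r v +
      (cnj (v ?Z) * complex_of_real ep * v ?O + cnj (v ?O) * complex_of_real ep * v ?Z)" for v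
    unfolding quad_def \<sigma>_def qE[symmetric] by (simp add: distrib_left distrib_right sum.distrib)
  have qr: "quad n ?r v = complex_of_real
     (\<Sum>i\<le>n. lam i * (cmod (\<Sum>t\<in>bits n. dicke n i t * v t))^2)" for v
    by (simp only: quad_dicke cnj_mult_self of_real_sum of_real_mult)
  have z0: "(\<Sum>t\<in>bits n. dicke n 0 t * v t) = v ?Z" for v
    unfolding dicke0 using Zb by (rule sum_pt)
  have zn: "(\<Sum>t\<in>bits n. dicke n n t * v t) = v ?O" for v
    unfolding dicken using Ob by (rule sum_pt)
  have density: "density n \<sigma>"
    unfolding density_iff
  proof (intro conjI allI impI)
    fix s t assume "s \<notin> bits n \<or> t \<notin> bits n"
    then show "\<sigma> s t = 0" using outside[OF dr] Zb Ob by (auto simp: \<sigma>_def E_def)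
  next
    fix s t show "\<sigma> t s = cnj (\<sigma> s t)"
      using herm[OF dr, of s t] by (auto simp: \<sigma>_def E_def)
  next
    fix v :: "(nat \<Rightarrow> bool) \<Rightarrow> complex"
    let ?a = "v ?Z" and ?b = "v ?O"
    have cc: "cnj ?b * complex_of_real ep * ?a = cnj (cnj ?a * complex_of_real ep * ?b)" by simp
    have ims: "Im (cnj ?a * complex_of_real ep * ?b + cnj ?b * complex_of_real ep * ?a) = 0"
      unfolding cc by simp
    show "Im (quad n \<sigma> v) = 0" unfolding qs qr using ims by simp
    define f where "f = (\<lambda>i. lam i * (cmod (\<Sum>t\<in>bits n. dicke n i t * v t))^2)"
    have "f 0 + f n = (\<Sum>i\<in>{0, n}. f i)" using n by simp
    also have "\<dots> \<le> (\<Sum>i\<le>n. f i)"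
      by (rule sum_mono2) (use lam(1) in \<open>auto simp: f_def\<close>)
    finally have fl: "lam 0 * (cmod ?a)^2 + lam n * (cmod ?b)^2 \<le> (\<Sum>i\<le>n. f i)"
      by (simp add: f_def z0 zn)
    have re: "Re (cnj ?a * complex_of_real ep * ?b + cnj ?b * complex_of_real ep * ?a)
        = 2 * ep * Re (cnj ?a * ?b)"
      unfolding cc by (simp add: algebra_simps)
    have "Re (cnj ?a * ?b) \<ge> - (cmod ?a * cmod ?b)"
    proof -
      have "\<bar>Re (cnj ?a * ?b)\<bar> \<le> cmod (cnj ?a * ?b)" by (rule abs_Re_le_cmod)
      then show ?thesis by (simp add: norm_mult)
    qed
    then have ineq: "lam 0 * (cmod ?a)^2 + lam n * (cmod ?b)^2 + 2 * sqrt (lam 0 * lam n) * Re (cnj ?a * ?b) \<ge> 0"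
      using l0 by (intro real_ineq) auto
    have R: "Re (quad n \<sigma> v) = (\<Sum>i\<le>n. f i) + 2 * ep * Re (cnj ?a * ?b)"
      unfolding qs qr f_def using re by simp
    show "Re (quad n \<sigma> v) \<ge> 0"
      using R fl ineq[folded ep_def] by linarith
  next
    have "(\<Sum>s\<in>bits n. \<sigma> s s) = (\<Sum>s\<in>bits n. ?r s s)"
      using ZO by (intro sum.cong) (auto simp: \<sigma>_def E_def)
    then show "(\<Sum>s\<in>bits n. \<sigma> s s) = 1" using trace1[OF dr] by simp
  qed
  have ne: "\<sigma> \<noteq> ?r"
  proof
    assume "\<sigma> = ?r"
    then have "\<sigma> ?Z ?O = ?r ?Z ?O" by simp
    then show False using ep0 by (simp add: \<sigma>_def E_def)
  qed
  have pt: "ptrace n S \<sigma> = ptrace n S ?r" if j: "j < n" "j \<notin> S" for S j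
  proof (intro ext)
    fix a b
    show "ptrace n S \<sigma> a b = ptrace n S ?r a b"
    proof (cases "(\<forall>i. a i \<longrightarrow> i \<in> S \<and> i < n) \<and> (\<forall>i. b i \<longrightarrow> i \<in> S \<and> i < n)")
      case False then show ?thesis by (simp only: ptrace_CC if_False)
    next
      case True
      have aj: "\<not> a j" "\<not> b j" using True j by auto
      have "E (\<lambda>i. a i \<or> c i) (\<lambda>i. b i \<or> c i) = 0" for c
      proof -
        have "(\<lambda>i. a i \<or> c i) \<noteq> ?Z \<or> (\<lambda>i. b i \<or> c i) \<noteq> ?O"
        proof (rule ccontr)
          assume "\<not> ?thesis"
          then have e1: "(\<lambda>i. a i \<or> c i) = ?Z" and e2: "(\<lambda>i. b i \<or> c i) = ?O" by auto
          from fun_cong[OF e1, of j] fun_cong[OF e2, of j] show False using aj j by (simp add: cs_def)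
        qed
        moreover have "(\<lambda>i. a i \<or> c i) \<noteq> ?O \<or> (\<lambda>i. b i \<or> c i) \<noteq> ?Z"
        proof (rule ccontr)
          assume "\<not> ?thesis"
          then have e1: "(\<lambda>i. a i \<or> c i) = ?O" and e2: "(\<lambda>i. b i \<or> c i) = ?Z" by auto
          from fun_cong[OF e1, of j] fun_cong[OF e2, of j] show False using aj j by (simp add: cs_def)
        qed
        ultimately show ?thesis unfolding E_def by auto
      qed
      then show ?thesis using True by (simp add: ptrace_CC \<sigma>_def)
    qed
  qed
  show ?thesis using density ne pt by blast
qed



lemma exists_sigma:
  assumes n: "n \<ge> 2" and lam: "\<forall>i\<le>n. lam i \<ge> 0" "(\<Sum>i\<le>n. lam i) = 1"
    and c: "lam 0 * lam n \<noteq> 0 \<or> (\<forall>i\<le>n. odd i \<longrightarrow> lam i \<noteq> 0) \<or> (\<forall>i\<le>n. even i \<longrightarrow> lam i \<noteq> 0)"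
  shows "\<exists>\<sigma>. density n \<sigma> \<and> \<sigma> \<noteq> dicke_mix n lam \<and>
     (\<forall>S j. j < n \<longrightarrow> j \<notin> S \<longrightarrow> ptrace n S \<sigma> = ptrace n S (dicke_mix n lam))"
proof -
  have n1: "n \<ge> 1" using n by simp
  have alt: "\<exists>\<sigma>. density n \<sigma> \<and> \<sigma> \<noteq> dicke_mix n lam \<and>
     (\<forall>S j. j < n \<longrightarrow> j \<notin> S \<longrightarrow> ptrace n S \<sigma> = ptrace n S (dicke_mix n lam))"
    if e: "e \<noteq> 0" and pos: "\<forall>i\<le>n. lam i + e * (-1)^i * real (n choose i) \<ge> 0" for e
    using alt_construction[OF n1 lam(2) e pos] by blast
  let ?q = "\<lambda>i. lam i / real (n choose i)"
  have qpos: "?q i > 0" if "i \<le> n" "lam i \<noteq> 0" for i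
  proof -
    have "lam i \<ge> 0" using that(1) lam(1) by blast
    then have "lam i > 0" using that(2) by simp
    moreover have "real (n choose i) > 0" using that(1) by simp
    ultimately show ?thesis by simp
  qed
  consider "lam 0 * lam n \<noteq> 0" | "\<forall>i\<le>n. odd i \<longrightarrow> lam i \<noteq> 0" | "\<forall>i\<le>n. even i \<longrightarrow> lam i \<noteq> 0"
    using c by blast
  then show ?thesis
  proof cases
    case 1 then show ?thesis using cons_i[OF n1 lam] by blast
  next
    case 2
    define I where "I = {i. i \<le> n \<and> odd i}"
    define m where "m = Min (?q ` I)"
    have fin: "finite (?q ` I)" unfolding I_def by simp
    have ne: "?q ` I \<noteq> {}" using n unfolding I_def by (auto intro!: exI[of _ 1])
    have m0: "m > 0" unfolding m_def using fin ne qpos 2 by (auto simp: Min_gr_iff I_def)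
    have "\<forall>i\<le>n. lam i + m * (-1)^i * real (n choose i) \<ge> 0"
    proof (intro allI impI)
      fix i assume i: "i \<le> n"
      show "lam i + m * (-1)^i * real (n choose i) \<ge> 0"
      proof (cases "odd i")
        case True
        have "m \<le> ?q i" unfolding m_def using fin i True by (intro Min_le) (auto simp: I_def)
        then have "m * real (n choose i) \<le> lam i" using i by (simp add: le_divide_eq)
        then show ?thesis using True by simp
      next
        case False
        then show ?thesis using m0 lam(1) i by simp
      qed
    qed
    moreover have "m \<noteq> 0" using m0 by simp
    ultimately show ?thesis by (intro alt)
  next
    case 3
    define I where "I = {i. i \<le> n \<and> even i}"
    define m where "m = Min (?q ` I)"
    have fin: "finite (?q ` I)" unfolding I_def by simp
    have ne: "?q ` I \<noteq> {}" unfolding I_def by (auto intro!: exI[of _ 0])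
    have m0: "m > 0" unfolding m_def using fin ne qpos 3 by (auto simp: Min_gr_iff I_def)
    have "\<forall>i\<le>n. lam i + (- m) * (-1)^i * real (n choose i) \<ge> 0"
    proof (intro allI impI)
      fix i assume i: "i \<le> n"
      show "lam i + (- m) * (-1)^i * real (n choose i) \<ge> 0"
      proof (cases "even i")
        case True
        have "m \<le> ?q i" unfolding m_def using fin i True by (intro Min_le) (auto simp: I_def)
        then have "m * real (n choose i) \<le> lam i" using i by (simp add: le_divide_eq)
        then show ?thesis using True by simp
      next
        case False
        then show ?thesis using m0 lam(1) i by simp
      qed
    qed
    moreover have "- m \<noteq> 0" using m0 by simp
    ultimately show ?thesis by (intro alt)
  qed
qed

lemma determines_full:
  assumes "density n \<rho>"
  shows "determines n {{0..<n}} \<rho>"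
  unfolding determines_def compat_def
proof
  show "{\<sigma>. density n \<sigma> \<and> (\<forall>S\<in>{{0..<n}}. ptrace n S \<sigma> = ptrace n S \<rho>)} \<subseteq> {\<rho>}"
  proof
    fix \<sigma> assume "\<sigma> \<in> {\<sigma>. density n \<sigma> \<and> (\<forall>S\<in>{{0..<n}}. ptrace n S \<sigma> = ptrace n S \<rho>)}"
    then have d: "density n \<sigma>" and p: "ptrace n {0..<n} \<sigma> = ptrace n {0..<n} \<rho>" by auto
    have "\<sigma> = ptrace n {0..<n} \<sigma>" by (rule ptrace_full[symmetric]) (rule density_parts(1)[OF d])
    also have "\<dots> = ptrace n {0..<n} \<rho>" by (rule p)
    also have "\<dots> = \<rho>" by (rule ptrace_full) (rule density_parts(1)[OF assms])
    finally show "\<sigma> \<in> {\<rho>}" by simp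
  qed
  show "{\<rho>} \<subseteq> {\<sigma>. density n \<sigma> \<and> (\<forall>S\<in>{{0..<n}}. ptrace n S \<sigma> = ptrace n S \<rho>)}"
    using assms by simp
qed

theorem mainTheorem19:
  fixes n :: nat and lam :: "nat \<Rightarrow> real"
  assumes "n \<ge> 2"
    and "\<forall>i\<le>n. lam i \<ge> 0"
    and "(\<Sum>i\<le>n. lam i) = 1"
  shows "Lval n (dicke_mix n lam) = n \<longleftrightarrow>
           (lam 0 * lam n \<noteq> 0
            \<or> (\<forall>i\<le>n. odd i \<longrightarrow> lam i \<noteq> 0)
            \<or> (\<forall>i\<le>n. even i \<longrightarrow> lam i \<noteq> 0))"
proof -
  let ?r = "dicke_mix n lam"
  let ?P = "\<lambda>k. \<exists>SS. SS \<subseteq> Pow {0..<n} \<and> determines n SS ?r \<and> (\<forall>S\<in>SS. card S \<le> k)"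
  have dr: "density n ?r" by (rule density_dicke_mix[OF assms(2,3)])
  have Pn: "?P n"
    by (rule exI[of _ "{{0..<n}}"]) (simp add: determines_full[OF dr])
  show ?thesis
  proof
    assume L: "Lval n ?r = n"
    show "lam 0 * lam n \<noteq> 0 \<or> (\<forall>i\<le>n. odd i \<longrightarrow> lam i \<noteq> 0) \<or> (\<forall>i\<le>n. even i \<longrightarrow> lam i \<noteq> 0)"
    proof (rule ccontr)
      assume "\<not> ?thesis"
      then have c1: "lam 0 * lam n = 0" and c2: "\<exists>i\<le>n. odd i \<and> lam i = 0"
        and c3: "\<exists>i\<le>n. even i \<and> lam i = 0" by auto
      obtain i0 where i0: "i0 \<le> n" "odd i0" "lam i0 = 0" using c2 by blast
      obtain i1 where i1: "i1 \<le> n" "even i1" "lam i1 = 0" using c3 by blast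
      define SS where "SS = (\<lambda>j. {0..<n} - {j}) ` {..<n}"
      have "?P (n - 1)"
      proof (intro exI[of _ SS] conjI)
        show "SS \<subseteq> Pow {0..<n}" by (auto simp: SS_def)
        show "\<forall>S\<in>SS. card S \<le> n - 1" by (auto simp: SS_def)
        show "determines n SS ?r"
          unfolding determines_def compat_def
        proof
          show "{\<sigma>. density n \<sigma> \<and> (\<forall>S\<in>SS. ptrace n S \<sigma> = ptrace n S ?r)} \<subseteq> {?r}"
          proof
            fix \<sigma> assume "\<sigma> \<in> {\<sigma>. density n \<sigma> \<and> (\<forall>S\<in>SS. ptrace n S \<sigma> = ptrace n S ?r)}"
            then have d: "density n \<sigma>" and p: "\<forall>S\<in>SS. ptrace n S \<sigma> = ptrace n S ?r" by auto
            have H: "\<forall>j<n. ptrace n ({0..<n} - {j}) \<sigma> = ptrace n ({0..<n} - {j}) ?r"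
              using p by (auto simp: SS_def)
            have "\<sigma> = ?r" by (rule uniq[OF assms d H c1 i0 i1])
            then show "\<sigma> \<in> {?r}" by simp
          qed
          show "{?r} \<subseteq> {\<sigma>. density n \<sigma> \<and> (\<forall>S\<in>SS. ptrace n S \<sigma> = ptrace n S ?r)}"
            using dr by simp
        qed
      qed
      then have "Lval n ?r \<le> n - 1" unfolding Lval_def by (rule Least_le)
      then show False using L assms(1) by simp
    qed
  next
    assume c: "lam 0 * lam n \<noteq> 0 \<or> (\<forall>i\<le>n. odd i \<longrightarrow> lam i \<noteq> 0) \<or> (\<forall>i\<le>n. even i \<longrightarrow> lam i \<noteq> 0)"
    obtain \<sigma> where d: "density n \<sigma>" and ne: "\<sigma> \<noteq> ?r"
      and pt: "\<forall>S j. j < n \<longrightarrow> j \<notin> S \<longrightarrow> ptrace n S \<sigma> = ptrace n S ?r"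
      using exists_sigma[OF assms c] by blast
    show "Lval n ?r = n" unfolding Lval_def
    proof (rule Least_equality)
      show "?P n" by (rule Pn)
      fix k assume "?P k"
      then obtain SS where SS: "SS \<subseteq> Pow {0..<n}" "determines n SS ?r" "\<forall>S\<in>SS. card S \<le> k"
        by blast
      show "n \<le> k"
      proof (rule ccontr)
        assume "\<not> n \<le> k"
        then have kn: "k < n" by simp
        have "\<sigma> \<in> compat n ?r SS"
          unfolding compat_def
        proof (intro CollectI conjI ballI)
          show "density n \<sigma>" by (rule d)
          fix S assume S: "S \<in> SS"
          have Ssub: "S \<subseteq> {0..<n}" using SS(1) S by auto
          have "\<exists>j<n. j \<notin> S"
          proof (rule ccontr)
            assume "\<not> (\<exists>j<n. j \<notin> S)"
            then have "{0..<n} \<subseteq> S" by auto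
            then have "card {0..<n} \<le> card S" using Ssub by (intro card_mono) (auto intro: finite_subset)
            then show False using SS(3) S kn by fastforce
          qed
          then obtain j where "j < n" "j \<notin> S" by blast
          then show "ptrace n S \<sigma> = ptrace n S ?r" using pt by blast
        qed
        then have "\<sigma> = ?r" using SS(2) unfolding determines_def by blast
        then show False using ne by simp
      qed
    qed
  qed
qed


end
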